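(* Let $a_1,a_2,a_3,a_4$ be constants and define $$Q(x,y,z)=yz(x-1)(x-y)(x-z)a_1+xz(y-1)(y-x)(y-z)a_2+xy(z-1)(z-x)(z-y)a_3+xyz(x-1)(y-1)(z-1)a_4.$$ Let $c_1$ be a constant and $x_1,y_1,z_1$ nonzero constants with $Q(x_1,y_1,z_1)=0$. Then $\tau_{k,l,m}=1+c_1x_1^ky_1^lz_1^m$ satisfies, for all $(k,l,m)\in\mathbb{Z}^3$, the dual AKP equation $$\begin{aligned}0=&\,a_1\big(\tau_{k-1,l+1,m+1}\tau_{k+1,l,m}\tau_{k+1,l,m+1}\tau_{k+1,l+1,m}-\tau_{k,l,m+1}\tau_{k,l+1,m}\tau_{k,l+1,m+1}\tau_{k+2,l,m}\big)\\&+a_2\big(\tau_{k,l+1,m}\tau_{k,l+1,m+1}\tau_{k+1,l-1,m+1}\tau_{k+1,l+1,m}-\tau_{k,l,m+1}\tau_{k,l+2,m}\tau_{k+1,l,m}\tau_{k+1,l,m+1}\big)\\&+a_3\big(\tau_{k,l,m+1}\tau_{k,l+1,m+1}\tau_{k+1,l,m+1}\tau_{k+1,l+1,m-1}-\tau_{k,l,m+2}\tau_{k,l+1,m}\tau_{k+1,l,m}\tau_{k+1,l+1,m}\big)\\&+a_4\big(\tau_{k,l,m}\tau_{k,l+1,m+1}\tau_{k+1,l,m+1}\tau_{k+1,l+1,m}-\tau_{k,l,m+1}\tau_{k,l+1,m}\tau_{k+1,l,m}\tau_{k+1,l+1,m+1}\big).\end{aligned}$$ *)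

theory Defs
  imports Complex_Main
begin

definition Qpoly :: "complex \<Rightarrow> complex \<Rightarrow> complex \<Rightarrow> complex \<Rightarrow> complex \<Rightarrow> complex \<Rightarrow> complex \<Rightarrow> complex" where
  "Qpoly a1 a2 a3 a4 x y z =
     y*z*(x-1)*(x-y)*(x-z)*a1 + x*z*(y-1)*(y-x)*(y-z)*a2
   + x*y*(z-1)*(z-x)*(z-y)*a3 + x*y*z*(x-1)*(y-1)*(z-1)*a4"

definition dualAKP :: "complex \<Rightarrow> complex \<Rightarrow> complex \<Rightarrow> complex \<Rightarrow> (int \<Rightarrow> int \<Rightarrow> int \<Rightarrow> complex) \<Rightarrow> int \<Rightarrow> int \<Rightarrow> int \<Rightarrow> complex" where
  "dualAKP a1 a2 a3 a4 \<tau> k l m =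
     a1 * (\<tau> (k-1) (l+1) (m+1) * \<tau> (k+1) l m * \<tau> (k+1) l (m+1) * \<tau> (k+1) (l+1) m
         - \<tau> k l (m+1) * \<tau> k (l+1) m * \<tau> k (l+1) (m+1) * \<tau> (k+2) l m)
   + a2 * (\<tau> k (l+1) m * \<tau> k (l+1) (m+1) * \<tau> (k+1) (l-1) (m+1) * \<tau> (k+1) (l+1) m
         - \<tau> k l (m+1) * \<tau> k (l+2) m * \<tau> (k+1) l m * \<tau> (k+1) l (m+1))
   + a3 * (\<tau> k l (m+1) * \<tau> k (l+1) (m+1) * \<tau> (k+1) l (m+1) * \<tau> (k+1) (l+1) (m-1)
         - \<tau> k l (m+2) * \<tau> k (l+1) m * \<tau> (k+1) l m * \<tau> (k+1) (l+1) m)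
   + a4 * (\<tau> k l m * \<tau> k (l+1) (m+1) * \<tau> (k+1) l (m+1) * \<tau> (k+1) (l+1) m
         - \<tau> k l (m+1) * \<tau> k (l+1) m * \<tau> (k+1) l m * \<tau> (k+1) (l+1) (m+1))"

end

theory Submission
  imports Defs
begin

lemma keyid:
  fixes C x y z xi yi zi a1 a2 a3 a4 :: complex
  assumes "x * xi = 1" "y * yi = 1" "z * zi = 1"
  defines "t \<equiv> (\<lambda>a b c. 1 + C * a * b * c)"
  shows "x*y*z*(
     a1 * (t xi y z * t x 1 1 * t x 1 z * t x y 1
         - t 1 1 z * t 1 y 1 * t 1 y z * t (x*x) 1 1)
   + a2 * (t 1 y 1 * t 1 y z * t x yi z * t x y 1
         - t 1 1 z * t 1 (y*y) 1 * t x 1 1 * t x 1 z)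
   + a3 * (t 1 1 z * t 1 y z * t x 1 z * t x y zi
         - t 1 1 (z*z) * t 1 y 1 * t x 1 1 * t x y 1)
   + a4 * (t 1 1 1 * t 1 y z * t x 1 z * t x y 1
         - t 1 1 z * t 1 y 1 * t x 1 1 * t x y z))
   = C * (C^2*x*y*z - 1) * Qpoly a1 a2 a3 a4 x y z"
  using assms unfolding t_def Qpoly_def
  by algebra

theorem mainTheorem2:
  fixes a1 a2 a3 a4 c1 x1 y1 z1 :: complex
  assumes "x1 \<noteq> 0" "y1 \<noteq> 0" "z1 \<noteq> 0"
    and "Qpoly a1 a2 a3 a4 x1 y1 z1 = 0"
  shows "\<forall>k l m :: int. dualAKP a1 a2 a3 a4
           (\<lambda>k l m. 1 + c1 * x1 powi k * y1 powi l * z1 powi m) k l m = 0"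
proof (intro allI)
  fix k l m :: int
  define C where "C = c1 * x1 powi k * y1 powi l * z1 powi m"
  define \<tau> where "\<tau> = (\<lambda>k l m. 1 + c1 * x1 powi k * y1 powi l * z1 powi m)"
  have f0: "\<tau> (k-1) (l+1) (m+1) = 1 + C * inverse x1 * y1 * z1"
    using assms(1-3) by (simp add: \<tau>_def C_def power_int_add power_int_diff power2_eq_square field_simps)
  have f1: "\<tau> (k+1) l m = 1 + C * x1 * 1 * 1"
    using assms(1-3) by (simp add: \<tau>_def C_def power_int_add power_int_diff power2_eq_square field_simps)
  have f2: "\<tau> (k+1) l (m+1) = 1 + C * x1 * 1 * z1"
    using assms(1-3) by (simp add: \<tau>_def C_def power_int_add power_int_diff power2_eq_square field_simps)
  have f3: "\<tau> (k+1) (l+1) m = 1 + C * x1 * y1 * 1"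
    using assms(1-3) by (simp add: \<tau>_def C_def power_int_add power_int_diff power2_eq_square field_simps)
  have f4: "\<tau> k l (m+1) = 1 + C * 1 * 1 * z1"
    using assms(1-3) by (simp add: \<tau>_def C_def power_int_add power_int_diff power2_eq_square field_simps)
  have f5: "\<tau> k (l+1) m = 1 + C * 1 * y1 * 1"
    using assms(1-3) by (simp add: \<tau>_def C_def power_int_add power_int_diff power2_eq_square field_simps)
  have f6: "\<tau> k (l+1) (m+1) = 1 + C * 1 * y1 * z1"
    using assms(1-3) by (simp add: \<tau>_def C_def power_int_add power_int_diff power2_eq_square field_simps)
  have f7: "\<tau> (k+2) l m = 1 + C * (x1*x1) * 1 * 1"
    using assms(1-3) by (simp add: \<tau>_def C_def power_int_add power_int_diff power2_eq_square field_simps)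
  have f8: "\<tau> (k+1) (l-1) (m+1) = 1 + C * x1 * inverse y1 * z1"
    using assms(1-3) by (simp add: \<tau>_def C_def power_int_add power_int_diff power2_eq_square field_simps)
  have f9: "\<tau> k (l+2) m = 1 + C * 1 * (y1*y1) * 1"
    using assms(1-3) by (simp add: \<tau>_def C_def power_int_add power_int_diff power2_eq_square field_simps)
  have f10: "\<tau> (k+1) (l+1) (m-1) = 1 + C * x1 * y1 * inverse z1"
    using assms(1-3) by (simp add: \<tau>_def C_def power_int_add power_int_diff power2_eq_square field_simps)
  have f11: "\<tau> k l (m+2) = 1 + C * 1 * 1 * (z1*z1)"
    using assms(1-3) by (simp add: \<tau>_def C_def power_int_add power_int_diff power2_eq_square field_simps)
  have f12: "\<tau> k l m = 1 + C * 1 * 1 * 1"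
    using assms(1-3) by (simp add: \<tau>_def C_def power_int_add power_int_diff power2_eq_square field_simps)
  have f13: "\<tau> (k+1) (l+1) (m+1) = 1 + C * x1 * y1 * z1"
    using assms(1-3) by (simp add: \<tau>_def C_def power_int_add power_int_diff power2_eq_square field_simps)
  have K: "x1 * y1 * z1 * dualAKP a1 a2 a3 a4 \<tau> k l m
    = C * (C^2*x1*y1*z1 - 1) * Qpoly a1 a2 a3 a4 x1 y1 z1"
    unfolding dualAKP_def f0 f1 f2 f3 f4 f5 f6 f7 f8 f9 f10 f11 f12 f13
    by (rule keyid) (use assms(1-3) in simp_all)
  then show "dualAKP a1 a2 a3 a4
           (\<lambda>k l m. 1 + c1 * x1 powi k * y1 powi l * z1 powi m) k l m = 0"
    using assms unfolding \<tau>_def by simp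
qed

end
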